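(* The topological stable rank of the topological ring $s'(\mathbb{Z}^d)$ (for any $d\ge1$), equipped with its weak-$*$ topology as the dual of $s(\mathbb{Z}^d)$, is $1$; that is, the set of invertible elements of $s'(\mathbb{Z}^d)$ is dense in $s'(\mathbb{Z}^d)$.
   Context: For $\mathbf{n}\in\mathbb{Z}^d$, $\|\mathbf{n}\|_1$ denotes the $1$-norm. $s'(\mathbb{Z}^d)$ is the set of all maps $\mathbf{a}:\mathbb{Z}^d\to\mathbb{C}$ for which there exist $M>0$ and $k\in\mathbb{N}$ with $|\mathbf{a}(\mathbf{n})|\le M(1+\|\mathbf{n}\|_1)^k$ for all $\mathbf{n}$; it is a commutative unital ring under pointwise operations. $s(\mathbb{Z}^d)$ is the space of maps $\mathbf{b}:\mathbb{Z}^d\to\mathbb{C}$ with $\sup_{\mathbf{n}}(1+\|\mathbf{n}\|_1)^k|\mathbf{b}(\mathbf{n})|<\infty$ for every $k\in\mathbb{N}$. The pairing $\langle \mathbf{a},\mathbf{b}\rangle=\sum_{\mathbf{n}\in\mathbb{Z}^d}\mathbf{a}(\mathbf{n})\mathbf{b}(\mathbf{n})$ for $\mathbf{a}\in s'(\mathbb{Z}^d)$, $\mathbf{b}\in s(\mathbb{Z}^d)$ defines the weak-$*$ topology on $s'(\mathbb{Z}^d)$: a net $(\mathbf{a}_i)$ converges to $\mathbf{a}$ iff $\langle\mathbf{a}_i,\mathbf{b}\rangle\to\langle\mathbf{a},\mathbf{b}\rangle$ for every $\mathbf{b}\in s(\mathbb{Z}^d)$. For a commutative unital topological ring $R$, $U_N(R)$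 is the set of $(a_1,\dots,a_N)\in R^N$ for which there exist $b_i\in R$ with $\sum b_ia_i=1$, and the topological stable rank of $R$ is the least integer $N\ge1$ such that $U_N(R)$ is dense in $R^N$ (product topology), or $\infty$ if there is none. *)

theory Defs
  imports "HOL-Analysis.Analysis" "HOL-Library.Extended_Nat"
begin

text \<open>The lattice Z^d is modelled as functions 'd \<Rightarrow> int for a finite index type 'd
  (so d = CARD('d) \<ge> 1 is arbitrary).\<close>

definition norm1 :: "('d::finite \<Rightarrow> int) \<Rightarrow> real" where
  "norm1 n = (\<Sum>i\<in>UNIV. real_of_int \<bar>n i\<bar>)"

definition s_dual :: "(('d::finite \<Rightarrow> int) \<Rightarrow> complex) set" where
  "s_dual = {a. \<exists>M>0. \<exists>k::nat. \<forall>n. cmod (a n) \<le> M * (1 + norm1 n) ^ k}"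

definition s_space :: "(('d::finite \<Rightarrow> int) \<Rightarrow> complex) set" where
  "s_space = {b. \<forall>k::nat. bounded (range (\<lambda>n. (1 + norm1 n) ^ k * cmod (b n)))}"

definition pairing :: "(('d::finite \<Rightarrow> int) \<Rightarrow> complex) \<Rightarrow> (('d \<Rightarrow> int) \<Rightarrow> complex) \<Rightarrow> complex" where
  "pairing a b = infsum (\<lambda>n. a n * b n) UNIV"

definition weak_star :: "(('d::finite \<Rightarrow> int) \<Rightarrow> complex) topology" where
  "weak_star = topology_generated_by
     {{a \<in> s_dual. pairing a b \<in> U} | b U. b \<in> s_space \<and> open U}"

definition U_tuples :: "nat \<Rightarrow> (nat \<Rightarrow> ('d::finite \<Rightarrow> int) \<Rightarrow> complex) set" where
  "U_tuples N = {a \<in> PiE {..<N} (\<lambda>_. s_dual).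
      \<exists>b \<in> PiE {..<N} (\<lambda>_. s_dual). (\<lambda>n. \<Sum>i<N. b i n * a i n) = (\<lambda>_. 1)}"

definition dense_in_power :: "nat \<Rightarrow> 'd::finite itself \<Rightarrow> bool" where
  "dense_in_power N _ \<longleftrightarrow>
     (product_topology (\<lambda>_. (weak_star :: (('d \<Rightarrow> int) \<Rightarrow> complex) topology)) {..<N})
        closure_of (U_tuples N :: (nat \<Rightarrow> ('d \<Rightarrow> int) \<Rightarrow> complex) set)
     = topspace (product_topology (\<lambda>_. (weak_star :: (('d \<Rightarrow> int) \<Rightarrow> complex) topology)) {..<N})"

definition tsr_s_dual :: "'d::finite itself \<Rightarrow> enat" where
  "tsr_s_dual d = (if \<exists>N\<ge>1. dense_in_power N d
                   then enat (LEAST N. N \<ge> 1 \<and> dense_in_power N d) else \<infinity>)"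

end

theory Submission
  imports Defs
begin

definition g1 :: "int \<Rightarrow> real" where "g1 z = inverse ((1 + real_of_int \<bar>z\<bar>)^2)"

definition GG :: "('d::finite \<Rightarrow> int) \<Rightarrow> real" where "GG n = (\<Prod>i\<in>UNIV. g1 (n i))"

lemma g1_nonneg: "g1 z \<ge> 0" by (simp add: g1_def)

lemma g1_summable: "g1 summable_on UNIV"
proof -
  define h :: "nat \<Rightarrow> real" where "h n = inverse (real (Suc n) ^ 2)" for n
  have "summable (\<lambda>n. inverse (real n ^ 2))" by (rule inverse_power_summable) simp
  then have "summable h" unfolding h_def
    using summable_Suc_iff[of "\<lambda>n. inverse (real n ^ 2)"] by simp
  then have hs: "h summable_on UNIV"
    by (intro summable_nonneg_imp_summable_on) (auto simp: h_def)
  have A: "g1 summable_on (int ` UNIV)"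
  proof (subst summable_on_reindex)
    show "inj_on int UNIV" by simp
    show "g1 \<circ> int summable_on UNIV"
      using hs by (rule summable_on_cong[THEN iffD1, rotated]) (auto simp: g1_def h_def add.commute)
  qed
  have B: "g1 summable_on ((\<lambda>n. - int n - 1) ` UNIV)"
  proof (subst summable_on_reindex)
    show "inj_on (\<lambda>n. - int n - 1) UNIV" by (auto simp: inj_on_def)
    show "g1 \<circ> (\<lambda>n. - int n - 1) summable_on UNIV"
    proof (rule summable_on_comparison_test[OF hs])
      fix n :: nat
      show "0 \<le> (g1 \<circ> (\<lambda>n. - int n - 1)) n" by (simp add: g1_nonneg)
      have "(1 + real n)^2 \<le> (1 + real_of_int \<bar>- int n - 1\<bar>)^2"
        by (intro power_mono) auto
      then show "(g1 \<circ> (\<lambda>n. - int n - 1)) n \<le> h n"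
        unfolding g1_def h_def o_def
        by (intro le_imp_inverse_le) (auto simp: add.commute)
    qed
  qed
  have U: "(UNIV::int set) = int ` UNIV \<union> (\<lambda>n. - int n - 1) ` UNIV"
  proof -
    { fix z :: int
      have "z \<in> int ` UNIV \<union> (\<lambda>n. - int n - 1) ` UNIV"
      proof (cases "z \<ge> 0")
        case True then show ?thesis by (auto intro!: image_eqI[of _ _ "nat z"])
      next
        case False then show ?thesis by (auto intro!: image_eqI[of _ _ "nat (- z - 1)"])
      qed }
    then show ?thesis by blast
  qed
  show ?thesis
    apply (subst U)
    apply (rule summable_on_Un_disjoint[OF A B])
    by auto
qed

lemma GG_summable: "(GG :: ('d::finite \<Rightarrow> int) \<Rightarrow> real) summable_on UNIV"
proof -
  have g1a: "Infinite_Set_Sum.abs_summable_on g1 UNIV"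
    using abs_summable_equivalent[of g1 UNIV] g1_summable
    by (simp add: g1_nonneg)
  have "Infinite_Set_Sum.abs_summable_on (\<lambda>n::'d \<Rightarrow> int. \<Prod>i\<in>UNIV. g1 (n i)) (PiE UNIV (\<lambda>_. UNIV))"
    by (rule abs_summable_on_prod_PiE) (use g1a in auto)
  then have "Infinite_Sum.abs_summable_on (\<lambda>n::'d \<Rightarrow> int. \<Prod>i\<in>UNIV. g1 (n i)) UNIV"
    using abs_summable_equivalent[of "\<lambda>n::'d \<Rightarrow> int. \<Prod>i\<in>UNIV. g1 (n i)" UNIV] by (simp add: PiE_UNIV)
  then have "(\<lambda>n::'d \<Rightarrow> int. \<Prod>i\<in>UNIV. g1 (n i)) summable_on UNIV" by (rule abs_summable_summable)
  then show ?thesis unfolding GG_def by simp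
qed

lemma GG_nonneg: "GG n \<ge> 0" by (simp add: GG_def g1_nonneg prod_nonneg)

lemma norm1_nonneg: "norm1 n \<ge> 0" by (simp add: norm1_def sum_nonneg)

lemma GG_lower: "inverse ((1 + norm1 (n::'d::finite \<Rightarrow> int)) ^ (2 * CARD('d))) \<le> GG n"
proof -
  have "(\<Prod>i\<in>UNIV. (1 + real_of_int \<bar>n i\<bar>)^2) \<le> (\<Prod>i\<in>(UNIV::'d set). (1 + norm1 n)^2)"
  proof (rule prod_mono)
    fix i :: 'd
    have "real_of_int \<bar>n i\<bar> \<le> norm1 n"
      unfolding norm1_def by (rule member_le_sum) auto
    then show "0 \<le> (1 + real_of_int \<bar>n i\<bar>)^2 \<and> (1 + real_of_int \<bar>n i\<bar>)^2 \<le> (1 + norm1 n)^2"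
      by (intro conjI power_mono) auto
  qed
  also have "\<dots> = (1 + norm1 n) ^ (2 * CARD('d))"
    by (simp add: power_mult)
  finally have le: "(\<Prod>i\<in>UNIV. (1 + real_of_int \<bar>n i\<bar>)^2) \<le> (1 + norm1 n) ^ (2 * CARD('d))" .
  have pos: "(\<Prod>i\<in>UNIV. (1 + real_of_int \<bar>n i\<bar>)^2) > 0"
    by (intro prod_pos) auto
  have "GG n = inverse (\<Prod>i\<in>UNIV. (1 + real_of_int \<bar>n i\<bar>)^2)"
    unfolding GG_def g1_def using prod_inversef[of "\<lambda>i. (1 + real_of_int \<bar>n i\<bar>)^2" UNIV]
    by (simp add: o_def)
  then show ?thesis using le pos by (simp add: le_imp_inverse_le)
qed

lemma s_space_bound:
  assumes "b \<in> s_space"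
  shows "\<exists>C\<ge>0. \<forall>n::'d::finite \<Rightarrow> int. (1 + norm1 n) ^ k * cmod (b n) \<le> C * GG n"
proof -
  let ?d = "2 * CARD('d)"
  have "bounded (range (\<lambda>n::'d \<Rightarrow> int. (1 + norm1 n) ^ (k + ?d) * cmod (b n)))"
    using assms unfolding s_space_def by blast
  then obtain C where C: "\<And>n::'d\<Rightarrow>int. norm ((1 + norm1 n) ^ (k + ?d) * cmod (b n)) \<le> C"
    unfolding bounded_iff by blast
  have C0: "C \<ge> 0" using C[of undefined] by (meson norm_ge_zero order_trans)
  show ?thesis
  proof (intro exI[of _ C] conjI allI C0)
    fix n :: "'d \<Rightarrow> int"
    define X where "X = 1 + norm1 n"
    have X1: "X \<ge> 1" using norm1_nonneg[of n] by (simp add: X_def)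
    have c: "X ^ k * cmod (b n) * X ^ ?d \<le> C"
      using C[of n] X1 by (simp add: X_def power_add abs_mult mult_ac)
    have Xd: "X ^ ?d > 0" using X1 by simp
    have "X ^ k * cmod (b n) \<le> C * inverse (X ^ ?d)"
      using c Xd by (simp add: field_simps)
    also have "\<dots> \<le> C * GG n"
      using GG_lower[of n] C0 by (intro mult_left_mono) (auto simp: X_def)
    finally show "(1 + norm1 n) ^ k * cmod (b n) \<le> C * GG n" by (simp add: X_def)
  qed
qed


definition cc :: "(('d::finite \<Rightarrow> int) \<Rightarrow> complex) \<Rightarrow> nat \<Rightarrow> ('d \<Rightarrow> int) \<Rightarrow> complex" where
  "cc a m n = (if inverse (real (Suc m)) \<le> cmod (a n) then a n else complex_of_real (inverse (real (Suc m))))"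

lemma aux_norm: "cmod (inverse (1 + complex_of_nat m)) = inverse (1 + real m)"
proof -
  have e: "1 + complex_of_nat m = complex_of_real (1 + real m)" by simp
  show ?thesis unfolding e norm_inverse norm_of_real by simp
qed

lemma cc_lower: "cmod (cc a m n) \<ge> inverse (real (Suc m))"
  by (simp add: cc_def aux_norm)

lemma cc_diff: "cmod (cc a m n - a n) \<le> 2 * inverse (real (Suc m))"
proof (cases "inverse (real (Suc m)) \<le> cmod (a n)")
  case True then show ?thesis by (simp add: cc_def)
next
  case False
  then have "cmod (complex_of_real (inverse (real (Suc m))) - a n) \<le> inverse (real (Suc m)) + cmod (a n)"
    by (metis norm_diff_ineq norm_of_real abs_of_nonneg inverse_nonnegative_iff_nonnegative of_nat_0_le_iff
        norm_triangle_ineq4)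
  with False show ?thesis by (simp add: cc_def)
qed

lemma cc_in_s_dual:
  fixes a :: "('d::finite \<Rightarrow> int) \<Rightarrow> complex"
  assumes "a \<in> s_dual" shows "cc a m \<in> s_dual"
proof -
  obtain M k where M: "M > 0" and b: "\<And>n. cmod (a n) \<le> M * (1 + norm1 n) ^ k"
    using assms unfolding s_dual_def by blast
  show ?thesis unfolding s_dual_def
  proof (intro CollectI exI[of _ "M + 1"] conjI allI exI[of _ k])
    show "M + 1 > 0" using M by simp
    fix n :: "'d \<Rightarrow> int"
    have X: "(1 + norm1 n) ^ k \<ge> 1" using norm1_nonneg[of n] by simp
    have i: "inverse (real (Suc m)) \<le> 1" by (simp add: field_simps)
    have "cmod (cc a m n) \<le> cmod (a n) + 1"
      using i apply (auto simp: cc_def aux_norm)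
      using norm_ge_zero[of "a n"] by linarith
    also have "\<dots> \<le> M * (1 + norm1 n) ^ k + (1 + norm1 n) ^ k" using b[of n] X by simp
    finally show "cmod (cc a m n) \<le> (M + 1) * (1 + norm1 n) ^ k" by (simp add: algebra_simps)
  qed
qed

lemma cc_unit:
  fixes a :: "('d::finite \<Rightarrow> int) \<Rightarrow> complex"
  assumes "a \<in> s_dual" shows "(\<lambda>n. inverse (cc a m n)) \<in> s_dual"
  unfolding s_dual_def
proof (intro CollectI exI[of _ "real (Suc m)"] conjI allI exI[of _ 0])
  fix n :: "'d \<Rightarrow> int"
  have "cmod (cc a m n) \<ge> inverse (real (Suc m))" by (rule cc_lower)
  then have "inverse (cmod (cc a m n)) \<le> real (Suc m)"
    by (metis inverse_inverse_eq le_imp_inverse_le inverse_positive_iff_positive of_nat_0_less_iff zero_less_Suc)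
  then show "cmod (inverse (cc a m n)) \<le> real (Suc m) * (1 + norm1 n) ^ 0"
    by (simp add: norm_inverse)
qed simp

lemma cc_nonzero: "cc a m n \<noteq> 0"
  using cc_lower[of m a n] by (auto)

lemma prod_summable:
  fixes a :: "('d::finite \<Rightarrow> int) \<Rightarrow> complex"
  assumes "a \<in> s_dual" "b \<in> s_space"
  shows "Infinite_Sum.abs_summable_on (\<lambda>n::'d::finite \<Rightarrow> int. a n * b n) UNIV"
proof -
  obtain M k where M: "M > 0" and ab: "\<And>n. cmod (a n) \<le> M * (1 + norm1 n) ^ k"
    using assms unfolding s_dual_def by blast
  obtain C where C: "\<And>n::'d \<Rightarrow> int. (1 + norm1 n) ^ k * cmod (b n) \<le> C * GG n"
    using s_space_bound[OF assms(2), of k] by blast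
  show ?thesis
  proof (rule Infinite_Sum.abs_summable_on_comparison_test')
    show "(\<lambda>n. M * (C * GG n)) summable_on UNIV"
      by (intro summable_on_cmult_right summable_on_cmult_right GG_summable)
    fix n :: "'d \<Rightarrow> int"
    have "norm (a n * b n) = cmod (a n) * cmod (b n)" by (simp add: norm_mult)
    also have "\<dots> \<le> M * (1 + norm1 n) ^ k * cmod (b n)"
      using ab[of n] by (intro mult_right_mono) auto
    also have "\<dots> \<le> M * (C * GG n)" using C[of n] M by (simp add: mult.assoc)
    finally show "norm (a n * b n) \<le> M * (C * GG n)" by simp
  qed
qed

lemma pairing_conv:
  fixes a b :: "('d::finite \<Rightarrow> int) \<Rightarrow> complex"
  assumes "a \<in> s_dual" "b \<in> s_space"
  shows "(\<lambda>m. pairing (cc a m) b) \<longlonglongrightarrow> pairing a b"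
proof -
  obtain C where C0: "C \<ge> 0" and C: "\<And>n::'d \<Rightarrow> int. (1 + norm1 n) ^ 0 * cmod (b n) \<le> C * GG n"
    using s_space_bound[OF assms(2), of 0] by blast
  define S where "S = infsum GG (UNIV :: ('d \<Rightarrow> int) set)"
  have bound: "norm (pairing (cc a m) b - pairing a b) \<le> (2 * C * S) * inverse (real (Suc m))" for m
  proof -
    have s1: "(\<lambda>n. cc a m n * b n) summable_on UNIV"
      by (rule abs_summable_summable[OF prod_summable[OF cc_in_s_dual[OF assms(1)] assms(2)]])
    have s2: "(\<lambda>n. a n * b n) summable_on UNIV"
      by (rule abs_summable_summable[OF prod_summable[OF assms]])
    have hs: "(\<lambda>n::'d \<Rightarrow> int. 2 * inverse (real (Suc m)) * (C * GG n)) summable_on UNIV"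
      by (intro summable_on_cmult_right GG_summable)
    have pt: "norm ((cc a m n - a n) * b n) \<le> 2 * inverse (real (Suc m)) * (C * GG n)" for n
    proof -
      have "norm ((cc a m n - a n) * b n) = cmod (cc a m n - a n) * cmod (b n)" by (simp add: norm_mult)
      also have "\<dots> \<le> 2 * inverse (real (Suc m)) * cmod (b n)"
        by (intro mult_right_mono cc_diff) auto
      also have "\<dots> \<le> 2 * inverse (real (Suc m)) * (C * GG n)"
        using C[of n] by (intro mult_left_mono) auto
      finally show ?thesis .
    qed
    have as: "Infinite_Sum.abs_summable_on (\<lambda>n. (cc a m n - a n) * b n) UNIV"
      by (rule Infinite_Sum.abs_summable_on_comparison_test'[OF hs]) (use pt in simp)
    have eq: "pairing (cc a m) b - pairing a b = infsum (\<lambda>n. (cc a m n - a n) * b n) UNIV"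
    proof -
      have "pairing (cc a m) b = infsum (\<lambda>n. (cc a m n - a n) * b n + a n * b n) UNIV"
        unfolding pairing_def by (simp add: algebra_simps)
      also have "\<dots> = infsum (\<lambda>n. (cc a m n - a n) * b n) UNIV + pairing a b"
        unfolding pairing_def by (rule infsum_add[OF abs_summable_summable[OF as] s2])
      finally show ?thesis by simp
    qed
    have "norm (infsum (\<lambda>n. (cc a m n - a n) * b n) UNIV) \<le> infsum (\<lambda>n. norm ((cc a m n - a n) * b n)) UNIV"
      by (rule norm_infsum_bound[OF as])
    also have "\<dots> \<le> infsum (\<lambda>n::'d \<Rightarrow> int. 2 * inverse (real (Suc m)) * (C * GG n)) UNIV"
      using as hs pt by (intro Infinite_Sum.infsum_mono) auto
    also have "\<dots> = 2 * inverse (real (Suc m)) * (C * S)"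
      unfolding S_def by (simp add: infsum_cmult_right')
    finally show ?thesis using eq by (simp add: mult_ac)
  qed
  have "(\<lambda>m. (2 * C * S) * inverse (real (Suc m))) \<longlonglongrightarrow> 0"
    by (intro tendsto_mult_right_zero LIMSEQ_inverse_real_of_nat)
  then have "(\<lambda>m. pairing (cc a m) b - pairing a b) \<longlonglongrightarrow> 0"
    by (rule Lim_null_comparison[rotated]) (use bound in auto)
  then show ?thesis by (rule LIM_zero_cancel)
qed


lemma gen_lemma:
  assumes "generate_topology_on {{a \<in> s_dual. pairing a b \<in> U} | b U. b \<in> s_space \<and> open U} T"
  shows "\<forall>a\<in>T. a \<in> (s_dual :: (('d::finite \<Rightarrow> int) \<Rightarrow> complex) set) \<and> eventually (\<lambda>m. cc a m \<in> T) sequentially"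
  using assms
proof (induction rule: generate_topology_on.induct)
  case Empty
  then show ?case by simp
next
  case (Int S T)
  then show ?case by (auto simp: eventually_conj_iff)
next
  case (UN K)
  show ?case
  proof
    fix a assume "a \<in> \<Union>K"
    then obtain k where k: "k \<in> K" "a \<in> k" by blast
    with UN.IH[OF k(1)] have "a \<in> s_dual" "eventually (\<lambda>m. cc a m \<in> k) sequentially" by auto
    then show "a \<in> s_dual \<and> eventually (\<lambda>m. cc a m \<in> \<Union>K) sequentially"
      using k(1) by (auto elim: eventually_mono)
  qed
next
  case (Basis s)
  then obtain b U where s: "s = {a \<in> s_dual. pairing a b \<in> U}" and b: "b \<in> s_space" and U: "open U"
    by blast
  show ?case
  proof
    fix a assume "a \<in> s"
    then have a: "a \<in> s_dual" "pairing a b \<in> U" using s by auto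
    have "eventually (\<lambda>m. pairing (cc a m) b \<in> U) sequentially"
      by (rule topological_tendstoD[OF pairing_conv[OF a(1) b] U a(2)])
    then show "a \<in> s_dual \<and> eventually (\<lambda>m. cc a m \<in> s) sequentially"
      using a(1) by (auto simp: s cc_in_s_dual elim: eventually_mono)
  qed
qed

lemma zero_s_space: "(\<lambda>_. 0) \<in> s_space"
  unfolding s_space_def by simp

lemma topspace_weak_star: "topspace (weak_star :: (('d::finite \<Rightarrow> int) \<Rightarrow> complex) topology) = s_dual"
  unfolding weak_star_def topology_generated_by_topspace
proof
  show "\<Union> {{a \<in> s_dual. pairing a b \<in> U} | b U. b \<in> s_space \<and> open U} \<subseteq> (s_dual :: (('d \<Rightarrow> int) \<Rightarrow> complex) set)"
    by auto
  show "(s_dual :: (('d \<Rightarrow> int) \<Rightarrow> complex) set) \<subseteq> \<Union> {{a \<in> s_dual. pairing a b \<in> U} | b U. b \<in> s_space \<and> open U}"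
  proof
    fix a :: "('d \<Rightarrow> int) \<Rightarrow> complex" assume "a \<in> s_dual"
    then show "a \<in> \<Union> {{a \<in> s_dual. pairing a b \<in> U} | b U. b \<in> s_space \<and> open U}"
      using zero_s_space by (intro UnionI[of "{a \<in> s_dual. pairing a (\<lambda>_. 0) \<in> UNIV}"]) auto
  qed
qed

lemma dense1: "dense_in_power 1 TYPE('d::finite)"
  unfolding dense_in_power_def
proof (rule antisym)
  let ?X = "product_topology (\<lambda>_. (weak_star :: (('d \<Rightarrow> int) \<Rightarrow> complex) topology)) {..<1::nat}"
  show "?X closure_of U_tuples 1 \<subseteq> topspace ?X" by (rule closure_of_subset_topspace)
  show "topspace ?X \<subseteq> ?X closure_of U_tuples 1"
  proof
    fix x :: "nat \<Rightarrow> ('d \<Rightarrow> int) \<Rightarrow> complex" assume x: "x \<in> topspace ?X"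
    show "x \<in> ?X closure_of U_tuples 1"
      unfolding in_closure_of
    proof (intro conjI allI impI x)
      fix T assume T: "x \<in> T \<and> openin ?X T"
      then obtain V where V: "\<forall>i\<in>{..<1}. openin weak_star (V i)" "x \<in> PiE {..<1} V" "PiE {..<1} V \<subseteq> T"
        unfolding openin_product_topology_alt by blast
      have "openin weak_star (V 0)" using V(1) by simp
      then have g: "generate_topology_on {{a \<in> s_dual. pairing a b \<in> U} | b U. b \<in> s_space \<and> open U} (V 0)"
        unfolding weak_star_def openin_topology_generated_by_iff .
      have x0: "x 0 \<in> V 0" using V(2) by auto
      from gen_lemma[OF g] x0 have xs: "x 0 \<in> s_dual" and ev: "eventually (\<lambda>m. cc (x 0) m \<in> V 0) sequentially"
        by auto
      then obtain m where m: "cc (x 0) m \<in> V 0"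
        unfolding eventually_sequentially by auto
      define y where "y = restrict (\<lambda>_. cc (x 0) m) {..<(1::nat)}"
      have "y \<in> PiE {..<1} V" using m by (auto simp: y_def)
      then have yT: "y \<in> T" using V(3) by blast
      have yU: "y \<in> U_tuples 1"
        unfolding U_tuples_def
      proof (intro CollectI conjI bexI[of _ "restrict (\<lambda>_. \<lambda>n. inverse (cc (x 0) m n)) {..<(1::nat)}"])
        show "y \<in> PiE {..<1} (\<lambda>_. s_dual)" using cc_in_s_dual[OF xs] by (auto simp: y_def)
        show "restrict (\<lambda>_. \<lambda>n. inverse (cc (x 0) m n)) {..<(1::nat)} \<in> PiE {..<1} (\<lambda>_. s_dual)"
          using cc_unit[OF xs] by auto
        show "(\<lambda>n. \<Sum>i<1. restrict (\<lambda>_. \<lambda>n. inverse (cc (x 0) m n)) {..<(1::nat)} i n * y i n) = (\<lambda>_. 1)"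
          by (auto simp: y_def cc_nonzero)
      qed
      show "\<exists>y. y \<in> U_tuples 1 \<and> y \<in> T" using yT yU by blast
    qed
  qed
qed

theorem theorem1p8:
  shows "tsr_s_dual TYPE('d::finite) = 1"
proof -
  have d: "dense_in_power 1 TYPE('d)" by (rule dense1)
  have L: "(LEAST N. N \<ge> 1 \<and> dense_in_power N TYPE('d)) = 1"
    by (rule Least_equality) (use d in auto)
  show ?thesis unfolding tsr_s_dual_def using d L by (auto simp: one_enat_def)
qed

end
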